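(* Let $A,B,C$ be tridendriform algebras over a field $\mathbb{K}$. Then, under the canonical identification of $\overline{A}\otimes(\overline{B}\otimes\overline{C})$ with $(\overline{A}\otimes\overline{B})\otimes\overline{C}$, the tridendriform algebras $A\overline{\otimes}(B\overline{\otimes}C)$ and $(A\overline{\otimes}B)\overline{\otimes}C$ coincide: they have the same underlying subspace (spanned by the $a\otimes b\otimes c$, $a\in\overline A,b\in\overline B,c\in\overline C$, not all three equal to $1$) and the same three products.
   Context: A tridendriform algebra over $\mathbb{K}$ is a vector space $A$ with three bilinear products $\prec,\cdot,\succ$ such that, writing $a*b=a\prec b+a\cdot b+a\succ b$, for all $a,b,c\in A$: $(a\prec b)\prec c=a\prec(b*c)$, $(a\succ b)\prec c=a\succ(b\prec c)$, $(a*b)\succ c=a\succ(b\succ c)$, $(a\succ b)\cdot c=a\succ(b\cdot c)$, $(a\prec b)\cdot c=a\cdot(b\succ c)$, $(a\cdot b)\prec c=a\cdot(b\prec c)$, $(a\cdot b)\cdot c=a\cdot(b\cdot c)$. The augmentation of a tridendriform algebra $A$ is $\overline{A}=\mathbb{K}1\oplus A$, where $1$ is a unit for $*$, and for $a\in A$: $1\prec a=0$, $a\prec 1=a$, $1\succ a=a$, $a\succ 1=0$, $1\cdot a=a\cdot 1=0$. For tridendriform algebras $A,B$, $A\overline{\otimes}B:=(A\otimes B)\oplus(\mathbb{K}1\otimes B)\oplus(A\otimes\mathbb{K}1)\subseteq\overline A\otimes\overline B$, with products, for $\ltimes\in\{\prec,\cdot,\succ\}$: $(a\otimes 1)\ltimes(c\otimes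 1)=(a\ltimes c)\otimes 1$ for $a,c\in A$, and $(a\otimes b)\ltimes(c\otimes d)=(a*c)\otimes(b\ltimes d)$ whenever $b,d$ are not both equal to $1$ (augmented conventions). This is a tridendriform algebra, so $A\overline{\otimes}(B\overline{\otimes}C)$ and $(A\overline{\otimes}B)\overline{\otimes}C$ are defined (the augmentation of $B\overline\otimes C$ is identified with $\overline B\otimes\overline C$, its unit being $1\otimes 1$). *)

theory Defs
  imports Main
begin

text \<open>A vector space over the field 'k is represented via a basis:
  elements are finitely supported functions from the basis index set to 'k.
  A tridendriform algebra is given by a basis set bas, a fresh index unt
  (the basis vector of the adjoined unit 1 of the augmentation), and the
  structure constants of the three products on basis vectors; the products on
  arbitrary elements are their bilinear extensions.\<close>

datatype op3 = Lt | Dt | Rt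

record ('i, 'k) tds =
  bas :: "'i set"
  unt :: 'i
  pL :: "'i \<Rightarrow> 'i \<Rightarrow> 'i \<Rightarrow> 'k"
  pD :: "'i \<Rightarrow> 'i \<Rightarrow> 'i \<Rightarrow> 'k"
  pR :: "'i \<Rightarrow> 'i \<Rightarrow> 'i \<Rightarrow> 'k"

definition prd :: "('i, 'k) tds \<Rightarrow> op3 \<Rightarrow> 'i \<Rightarrow> 'i \<Rightarrow> 'i \<Rightarrow> 'k" where
  "prd T w = (case w of Lt \<Rightarrow> pL T | Dt \<Rightarrow> pD T | Rt \<Rightarrow> pR T)"

definition supp :: "('i \<Rightarrow> 'k::zero) \<Rightarrow> 'i set" where
  "supp f = {p. f p \<noteq> 0}"

definition vsp :: "'i set \<Rightarrow> ('i \<Rightarrow> 'k::zero) set" where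
  "vsp I = {x. finite (supp x) \<and> supp x \<subseteq> I}"

definition bvec :: "'i \<Rightarrow> 'i \<Rightarrow> 'k::{zero,one}" where
  "bvec i = (\<lambda>p. if p = i then 1 else 0)"

definition vplus :: "('i \<Rightarrow> 'k::plus) \<Rightarrow> ('i \<Rightarrow> 'k) \<Rightarrow> 'i \<Rightarrow> 'k" where
  "vplus x y = (\<lambda>r. x r + y r)"

definition bext :: "('i \<Rightarrow> 'i \<Rightarrow> 'i \<Rightarrow> 'k::comm_semiring_1) \<Rightarrow> ('i \<Rightarrow> 'k) \<Rightarrow> ('i \<Rightarrow> 'k) \<Rightarrow> 'i \<Rightarrow> 'k" where
  "bext P x y = (\<lambda>r. \<Sum>p\<in>supp x. \<Sum>q\<in>supp y. x p * y q * P p q r)"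

text \<open>Tensor product of vectors: basis of V \<otimes> W indexed by pairs.\<close>
definition tens :: "('i \<Rightarrow> 'k::times) \<Rightarrow> ('j \<Rightarrow> 'k) \<Rightarrow> ('i \<times> 'j) \<Rightarrow> 'k" where
  "tens f g = (\<lambda>(p, q). f p * g q)"

definition is_tridend :: "('i, 'k::field) tds \<Rightarrow> bool" where
  "is_tridend T \<longleftrightarrow>
     unt T \<notin> bas T \<and>
     (\<forall>w. \<forall>i\<in>bas T. \<forall>j\<in>bas T. prd T w i j \<in> vsp (bas T)) \<and>
     (\<forall>a\<in>vsp (bas T). \<forall>b\<in>vsp (bas T). \<forall>c\<in>vsp (bas T).
        let l = bext (pL T); d = bext (pD T); r = bext (pR T);
            s = (\<lambda>x y. vplus (vplus (l x y) (d x y)) (r x y))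
        in l (l a b) c = l a (s b c) \<and>
           l (r a b) c = r a (l b c) \<and>
           r (s a b) c = r a (r b c) \<and>
           d (r a b) c = r a (d b c) \<and>
           d (l a b) c = d a (r b c) \<and>
           l (d a b) c = d a (l b c) \<and>
           d (d a b) c = d a (d b c))"

definition augstar :: "('i, 'k::field) tds \<Rightarrow> 'i \<Rightarrow> 'i \<Rightarrow> 'i \<Rightarrow> 'k" where
  "augstar T i j =
     (if i = unt T then bvec j
      else if j = unt T then bvec i
      else vplus (vplus (pL T i j) (pD T i j)) (pR T i j))"

text \<open>Augmented \<prec>, \<cdot>, \<succ> on basis vectors, not both equal to the unit.\<close>
definition augop :: "('i, 'k::field) tds \<Rightarrow> op3 \<Rightarrow> 'i \<Rightarrow> 'i \<Rightarrow> 'i \<Rightarrow> 'k" where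
  "augop T w i j =
     (if i = unt T then (if w = Rt then bvec j else (\<lambda>_. 0))
      else if j = unt T then (if w = Lt then bvec i else (\<lambda>_. 0))
      else prd T w i j)"

definition tprod :: "('i, 'k::field) tds \<Rightarrow> ('j, 'k) tds \<Rightarrow> op3 \<Rightarrow>
    'i \<times> 'j \<Rightarrow> 'i \<times> 'j \<Rightarrow> 'i \<times> 'j \<Rightarrow> 'k" where
  "tprod T S w p q =
     (if snd p = unt S \<and> snd q = unt S
      then tens (prd T w (fst p) (fst q)) (bvec (unt S))
      else tens (augstar T (fst p) (fst q)) (augop S w (snd p) (snd q)))"

text \<open>A \<otimes>-bar B: basis = pairs of augmented basis indices except (1,1); its
  augmentation unit is 1 \<otimes> 1, i.e. the index (unt T, unt S).\<close>
definition tensor :: "('i, 'k::field) tds \<Rightarrow> ('j, 'k) tds \<Rightarrow> ('i \<times> 'j, 'k) tds" where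
  "tensor T S =
     \<lparr> bas = (insert (unt T) (bas T) \<times> insert (unt S) (bas S)) - {(unt T, unt S)},
       unt = (unt T, unt S),
       pL = tprod T S Lt, pD = tprod T S Dt, pR = tprod T S Rt \<rparr>"

definition reassoc :: "('a \<times> 'b \<times> 'c \<Rightarrow> 'k) \<Rightarrow> ('a \<times> 'b) \<times> 'c \<Rightarrow> 'k" where
  "reassoc x = (\<lambda>((i, j), l). x (i, (j, l)))"

end

theory Submission
  imports Defs
begin

lemma tens_bvec: "tens (bvec i) (bvec j) = (bvec (i, j) :: _ \<Rightarrow> 'k::comm_semiring_1)"
  by (auto simp: tens_def bvec_def fun_eq_iff)


lemma sum_augop:
  assumes "\<not> (b = unt B \<and> b' = unt B)"
  shows "vplus (vplus (augop B Lt b b') (augop B Dt b b')) (augop B Rt b b') = augstar B b b'"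
  using assms by (auto simp: augop_def augstar_def vplus_def prd_def fun_eq_iff)

lemma augstar_tensor:
  "augstar (tensor A B) (a,b) (a',b') = tens (augstar A a a') (augstar B b b')"
proof (cases "(a,b) = (unt A, unt B)")
  case True
  then have "a = unt A" "b = unt B" by auto
  then show ?thesis by (simp add: augstar_def tensor_def tens_bvec)
next
  case F1: False
  show ?thesis
  proof (cases "(a',b') = (unt A, unt B)")
    case True
    then have "a' = unt A" "b' = unt B" by auto
    then show ?thesis using F1 by (simp add: augstar_def tensor_def tens_bvec)
  next
    case F2: False
    show ?thesis
    proof (cases "b = unt B \<and> b' = unt B")
      case True
      then have "a \<noteq> unt A" "a' \<noteq> unt A" using F1 F2 by auto
      then show ?thesis using F1 F2 True
        by (auto simp add: augstar_def tensor_def tprod_def tens_def vplus_def prd_def fun_eq_iff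
            algebra_simps)
    next
      case False
      have "augstar (tensor A B) (a,b) (a',b') =
        vplus (vplus (tprod A B Lt (a,b) (a',b')) (tprod A B Dt (a,b) (a',b'))) (tprod A B Rt (a,b) (a',b'))"
        using F1 F2 by (auto simp add: augstar_def tensor_def)
      also have "\<dots> = tens (augstar A a a') (vplus (vplus (augop B Lt b b') (augop B Dt b b')) (augop B Rt b b'))"
        using False by (auto simp: tprod_def tens_def vplus_def fun_eq_iff algebra_simps)
      finally show ?thesis using sum_augop[OF False] by simp
    qed
  qed
qed

lemma prd_tensor: "prd (tensor T S) w = tprod T S w"
  by (cases w) (simp_all add: prd_def tensor_def)

lemma unt_tensor[simp]: "unt (tensor T S) = (unt T, unt S)"
  by (simp add: tensor_def)

lemma augop_tensor:
  "augop (tensor B C) w (b,c) (b',c') =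
    (if c = unt C \<and> c' = unt C then tens (augop B w b b') (bvec (unt C))
     else tens (augstar B b b') (augop C w c c'))"
proof (cases "(b,c) = (unt B, unt C)")
  case True
  then have "b = unt B" "c = unt C" by auto
  then show ?thesis
    by (cases "c' = unt C") (auto simp: augop_def augstar_def tensor_def tens_bvec tens_def fun_eq_iff bvec_def)
next
  case F1: False
  show ?thesis
  proof (cases "(b',c') = (unt B, unt C)")
    case True
    then have "b' = unt B" "c' = unt C" by auto
    then show ?thesis using F1
      by (auto simp: augop_def augstar_def tensor_def tens_bvec tens_def fun_eq_iff bvec_def)
  next
    case F2: False
    have "augop (tensor B C) w (b,c) (b',c') = tprod B C w (b,c) (b',c')"
      using F1 F2 by (auto simp: augop_def prd_tensor)
    then show ?thesis using F1 F2
      by (auto simp: tprod_def augop_def)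
  qed
qed

lemma key:
  fixes A :: "('a, 'k::field) tds" and B :: "('b, 'k) tds" and C :: "('c, 'k) tds"
  assumes "\<not> (a = unt A \<and> b = unt B \<and> c = unt C)"
      and "\<not> (a' = unt A \<and> b' = unt B \<and> c' = unt C)"
  shows "prd (tensor A (tensor B C)) w (a,b,c) (a',b',c') (a'',b'',c'')
       = prd (tensor (tensor A B) C) w ((a,b),c) ((a',b'),c') ((a'',b''),c'')"
proof (cases "b = unt B \<and> c = unt C \<and> b' = unt B \<and> c' = unt C")
  case True
  then show ?thesis using assms
    by (auto simp: prd_tensor tprod_def tens_def bvec_def)
next
  case F: False
  have L: "prd (tensor A (tensor B C)) w (a,b,c) (a',b',c') (a'',b'',c'')
     = augstar A a a' a'' * augop (tensor B C) w (b,c) (b',c') (b'',c'')"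
    using F by (auto simp: prd_tensor tprod_def tens_def)
  show ?thesis
  proof (cases "c = unt C \<and> c' = unt C")
    case True
    then have nb: "\<not> (b = unt B \<and> b' = unt B)" using F by auto
    have "prd (tensor (tensor A B) C) w ((a,b),c) ((a',b'),c') ((a'',b''),c'')
      = tprod A B w (a,b) (a',b') (a'',b'') * bvec (unt C) c''"
      using True by (simp add: prd_tensor tprod_def tens_def)
    also have "\<dots> = augstar A a a' a'' * augop B w b b' b'' * bvec (unt C) c''"
      using nb by (auto simp: tprod_def tens_def)
    finally show ?thesis using L True by (simp add: augop_tensor tens_def)
  next
    case False
    have "prd (tensor (tensor A B) C) w ((a,b),c) ((a',b'),c') ((a'',b''),c'')
      = augstar (tensor A B) (a,b) (a',b') (a'',b'') * augop C w c c' c''"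
      using False by (auto simp: prd_tensor tprod_def tens_def)
    also have "\<dots> = augstar A a a' a'' * augstar B b b' b'' * augop C w c c' c''"
      by (simp add: augstar_tensor tens_def)
    finally show ?thesis using L False by (simp add: augop_tensor tens_def mult.assoc)
  qed
qed

lemma bas3: "bas (tensor A (tensor B C)) =
   (insert (unt A) (bas A) \<times> (insert (unt B) (bas B) \<times> insert (unt C) (bas C))) - {(unt A, unt B, unt C)}"
  by (auto simp: tensor_def)

lemma bas3': "bas (tensor (tensor A B) C) =
   ((insert (unt A) (bas A) \<times> insert (unt B) (bas B)) \<times> insert (unt C) (bas C)) - {((unt A, unt B), unt C)}"
  by (auto simp: tensor_def)

lemma img_f: "((i, j), l) \<in> (\<lambda>(i, j, l). ((i, j), l)) ` S \<longleftrightarrow> (i, j, l) \<in> S"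
proof
  assume "((i, j), l) \<in> (\<lambda>(i, j, l). ((i, j), l)) ` S"
  then obtain p where "p \<in> S" "((i, j), l) = (\<lambda>(i, j, l). ((i, j), l)) p" by blast
  then show "(i, j, l) \<in> S" by (cases p) auto
next
  assume "(i, j, l) \<in> S"
  then show "((i, j), l) \<in> (\<lambda>(i, j, l). ((i, j), l)) ` S"
    by (rule rev_image_eqI) simp
qed

lemma supp_reassoc: "supp (reassoc x) = (\<lambda>(i, j, l). ((i, j), l)) ` supp x"
proof (rule set_eqI)
  fix r :: "('a \<times> 'b) \<times> 'c"
  obtain i j l where "r = ((i, j), l)" by (metis prod.exhaust)
  then show "r \<in> supp (reassoc x) \<longleftrightarrow> r \<in> (\<lambda>(i, j, l). ((i, j), l)) ` supp x"
    by (simp only: img_f) (simp add: supp_def reassoc_def)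
qed

lemma inj_f: "inj (\<lambda>(i::'a, j::'b, l::'c). ((i, j), l))"
  by (auto simp: inj_def)

theorem mainTheorem4:
  fixes A :: "('a, 'k::field) tds" and B :: "('b, 'k) tds" and C :: "('c, 'k) tds"
  assumes "is_tridend A" and "is_tridend B" and "is_tridend C"
  shows "(\<lambda>(i, j, l). ((i, j), l)) ` bas (tensor A (tensor B C)) = bas (tensor (tensor A B) C)
    \<and> (\<forall>w. \<forall>x\<in>vsp (bas (tensor A (tensor B C))). \<forall>y\<in>vsp (bas (tensor A (tensor B C))).
          reassoc (bext (prd (tensor A (tensor B C)) w) x y)
          = bext (prd (tensor (tensor A B) C) w) (reassoc x) (reassoc y))"
proof
  show "(\<lambda>(i, j, l). ((i, j), l)) ` bas (tensor A (tensor B C)) = bas (tensor (tensor A B) C)"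
  proof (rule set_eqI)
    fix r :: "('a \<times> 'b) \<times> 'c"
    obtain i j l where "r = ((i, j), l)" by (metis prod.exhaust)
    then show "r \<in> (\<lambda>(i, j, l). ((i, j), l)) ` bas (tensor A (tensor B C)) \<longleftrightarrow> r \<in> bas (tensor (tensor A B) C)"
      by (simp only: img_f bas3 bas3') blast
  qed
next
  let ?f = "\<lambda>(i::'a, j::'b, l::'c). ((i, j), l)"
  show "\<forall>w. \<forall>x\<in>vsp (bas (tensor A (tensor B C))). \<forall>y\<in>vsp (bas (tensor A (tensor B C))).
          reassoc (bext (prd (tensor A (tensor B C)) w) x y)
          = bext (prd (tensor (tensor A B) C) w) (reassoc x) (reassoc y)"
  proof (intro allI ballI ext)
    fix w and x y :: "'a \<times> 'b \<times> 'c \<Rightarrow> 'k" and r :: "('a \<times> 'b) \<times> 'c"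
    assume x: "x \<in> vsp (bas (tensor A (tensor B C)))" and y: "y \<in> vsp (bas (tensor A (tensor B C)))"
    obtain a'' b'' c'' where r: "r = ((a'', b''), c'')" by (metis prod.exhaust)
    have inj: "inj_on ?f S" for S using inj_f by (rule inj_on_subset) simp
    have "bext (prd (tensor (tensor A B) C) w) (reassoc x) (reassoc y) r
      = (\<Sum>p\<in>supp x. \<Sum>q\<in>supp y. reassoc x (?f p) * reassoc y (?f q) *
           prd (tensor (tensor A B) C) w (?f p) (?f q) r)"
      unfolding bext_def supp_reassoc
      by (simp add: sum.reindex[OF inj])
    also have "\<dots> = (\<Sum>p\<in>supp x. \<Sum>q\<in>supp y. x p * y q *
           prd (tensor A (tensor B C)) w p q (a'', b'', c''))"
    proof (intro sum.cong refl)
      fix p q assume p: "p \<in> supp x" and q: "q \<in> supp y"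
      obtain a b c where pe: "p = (a, b, c)" by (metis prod.exhaust)
      obtain a' b' c' where qe: "q = (a', b', c')" by (metis prod.exhaust)
      have "p \<in> bas (tensor A (tensor B C))" "q \<in> bas (tensor A (tensor B C))"
        using p q x y by (auto simp: vsp_def)
      then have n1: "\<not> (a = unt A \<and> b = unt B \<and> c = unt C)"
        and n2: "\<not> (a' = unt A \<and> b' = unt B \<and> c' = unt C)"
        unfolding bas3 pe qe by auto
      show "reassoc x (?f p) * reassoc y (?f q) * prd (tensor (tensor A B) C) w (?f p) (?f q) r
          = x p * y q * prd (tensor A (tensor B C)) w p q (a'', b'', c'')"
        using key[OF n1 n2, of w a'' b'' c''] by (simp add: pe qe r reassoc_def)
    qed
    also have "\<dots> = reassoc (bext (prd (tensor A (tensor B C)) w) x y) r"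
      by (simp add: r reassoc_def bext_def)
    finally show "reassoc (bext (prd (tensor A (tensor B C)) w) x y) r
          = bext (prd (tensor (tensor A B) C) w) (reassoc x) (reassoc y) r" by simp
  qed
qed

end
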